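(* There do not exist a finite set $H$ and functions $f:H\times\Sigma\to H$ and $o:H\times\Sigma\to\{1,-1\}$ such that every word of $\mathcal{L}$ is of the form $\mathrm{out}(x,\sigma)$ for some $x\in H$ and some $\sigma\in\Sigma^*$. Here, for $x\in H$ and $\sigma=s_1\cdots s_m\in\Sigma^*$, we set $h_0=x$, $h_i=f(h_{i-1},s_i)$, and $\mathrm{out}(x,\sigma)=t_1\cdots t_m\in\tilde\Sigma^*$, where $t_i=s_i$ if $o(h_{i-1},s_i)=1$ and $t_i=\tilde s_i$ if $o(h_{i-1},s_i)=-1$. (That is, a deterministic hidden-variable model with finitely many hidden states cannot account for all possible outcome sequences of the experiment.)
   Context: Let $\Sigma=\{A,B,C,a,b,c,\alpha,\beta,\gamma\}$ be nine observables arranged in a $3\times 3$ square with rows $(A,B,C)$, $(a,b,c)$, $(\alpha,\beta,\gamma)$. The six \emph{contexts} are the three rows $\{A,B,C\},\{a,b,c\},\{\alpha,\beta,\gamma\}$ and the three columns $\{A,a,\alpha\},\{B,b,\beta\},\{C,c,\gamma\}$. Each context has a sign: $-1$ for $\{C,c,\gamma\}$ and $+1$ for the other five. Two distinct observables are \emph{compatible} if they lie in a common context, and \emph{incompatible} otherwise. Let $\tilde\Sigma=\{X,\tilde X: X\in\Sigma\}$ (18 letters); the letter $X$ means "observable $X$ measured with value $1$" and $\tilde X$ means "$X$ measured with value $-1$". For a word $w=t_1\cdots t_m\in\tilde\Sigma^*$ define inductively partial assignments $v_0,\dots,v_m:\Sigma\rightharpoonup\{1,-1\}$ (an observable in $\mathrm{dom}(v_i)$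 is \emph{determined} after step $i$, with value $v_i(X)$), and whether $w$ is consistent: $v_0$ is the empty assignment. Given $v_{i-1}$, let $t_i$ record observable $X$ with value $\varepsilon$. If $X\in\mathrm{dom}(v_{i-1})$ and $v_{i-1}(X)\ne\varepsilon$, then $w$ is \emph{inconsistent}. Otherwise let $u$ be the restriction of $v_{i-1}$ to observables that are equal to or compatible with $X$, extended by $u(X)=\varepsilon$; then $v_i$ is obtained from $u$ by repeatedly doing the following until nothing changes: whenever a context has exactly two of its observables in the domain, assign the third observable the value making the product of the three values equal to the sign of that context. The word $w$ is \emph{consistent} if no step is inconsistent; $\mathcal{L}$ is the set of consistent words (it contains the empty word). *)

theory Defs
  imports Main
begin

datatype obs = A | B | C | a | b | c | al | be | ga

text \<open>Letters of the extended alphabet: Lt X means X measured with value 1,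
  Ltil X means X measured with value -1.\<close>
datatype letter = Lt obs | Ltil obs

definition contexts :: "(obs list \<times> int) list" where
  "contexts = [([A,B,C], 1), ([a,b,c], 1), ([al,be,ga], 1),
               ([A,a,al], 1), ([B,b,be], 1), ([C,c,ga], -1)]"

definition compatible :: "obs \<Rightarrow> obs \<Rightarrow> bool" where
  "compatible X Y \<longleftrightarrow> X \<noteq> Y \<and> (\<exists>(K,s)\<in>set contexts. X \<in> set K \<and> Y \<in> set K)"

fun letter_obs :: "letter \<Rightarrow> obs" where
  "letter_obs (Lt X) = X" | "letter_obs (Ltil X) = X"

fun letter_val :: "letter \<Rightarrow> int" where
  "letter_val (Lt X) = 1" | "letter_val (Ltil X) = -1"

type_synonym assignment = "obs \<Rightarrow> int option"

fun ctx_applicable :: "assignment \<Rightarrow> obs list \<times> int \<Rightarrow> bool" where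
  "ctx_applicable v ([X,Y,Z], s) = (card {W \<in> {X,Y,Z}. v W \<noteq> None} = 2)"
| "ctx_applicable v _ = False"

fun ctx_apply :: "assignment \<Rightarrow> obs list \<times> int \<Rightarrow> assignment" where
  "ctx_apply v ([X,Y,Z], s) =
     (if v X = None then v(X \<mapsto> s * the (v Y) * the (v Z))
      else if v Y = None then v(Y \<mapsto> s * the (v X) * the (v Z))
      else v(Z \<mapsto> s * the (v X) * the (v Y)))"
| "ctx_apply v _ = v"

definition prop_step :: "assignment \<Rightarrow> assignment" where
  "prop_step v = (case filter (ctx_applicable v) contexts of
                    [] \<Rightarrow> v | k # _ \<Rightarrow> ctx_apply v k)"

text \<open>Each effective step determines a new observable, so after 9 steps nothing changes.\<close>
definition propagate :: "assignment \<Rightarrow> assignment" where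
  "propagate v = (prop_step ^^ 9) v"

text \<open>Processing one letter: None signals inconsistency.\<close>
definition update :: "assignment \<Rightarrow> letter \<Rightarrow> assignment option" where
  "update v t = (let X = letter_obs t; e = letter_val t in
     if v X \<noteq> None \<and> v X \<noteq> Some e then None
     else Some (propagate ((\<lambda>Y. if Y = X \<or> compatible X Y then v Y else None)(X \<mapsto> e))))"

fun run :: "assignment \<Rightarrow> letter list \<Rightarrow> assignment option" where
  "run v [] = Some v"
| "run v (t # w) = (case update v t of None \<Rightarrow> None | Some v' \<Rightarrow> run v' w)"

definition consistent_lang :: "letter list set" where
  "consistent_lang = {w. run Map.empty w \<noteq> None}"

fun out :: "('h \<Rightarrow> obs \<Rightarrow> 'h) \<Rightarrow> ('h \<Rightarrow> obs \<Rightarrow> int) \<Rightarrow> 'h \<Rightarrow> obs list \<Rightarrow> letter list" where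
  "out f oo x [] = []"
| "out f oo x (s # \<sigma>) = (if oo x s = 1 then Lt s else Ltil s) # out f oo (f x s) \<sigma>"

end

theory Submission
  imports Defs
begin

lemma pA: "prop_step [A\<mapsto>e] = [A\<mapsto>e]"
  unfolding prop_step_def contexts_def by (simp add: Collect_conv_if insert_Collect)
lemma pb: "prop_step [b\<mapsto>e] = [b\<mapsto>e]"
  unfolding prop_step_def contexts_def by (simp add: Collect_conv_if insert_Collect)

lemma fix_pow: "g v = v \<Longrightarrow> (g ^^ n) v = v"
  by (induction n) auto

lemma propA: "propagate [A\<mapsto>e] = [A\<mapsto>e]"
  unfolding propagate_def using pA fix_pow by metis
lemma propb: "propagate [b\<mapsto>e] = [b\<mapsto>e]"
  unfolding propagate_def using pb fix_pow by metis

lemma compAb: "\<not> compatible A b" "\<not> compatible b A"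
  unfolding compatible_def contexts_def by auto

lemma upd1: "v A = None \<Longrightarrow> (\<forall>Y. Y \<noteq> A \<and> v Y \<noteq> None \<longrightarrow> \<not> compatible A Y) \<Longrightarrow>
   update v (if \<beta> then Lt A else Ltil A) = Some [A \<mapsto> (if \<beta> then 1 else -1)]"
proof -
  assume h: "v A = None" "\<forall>Y. Y \<noteq> A \<and> v Y \<noteq> None \<longrightarrow> \<not> compatible A Y"
  have "((\<lambda>Y. if Y = A \<or> compatible A Y then v Y else None)(A \<mapsto> (if \<beta> then 1 else -1)))
        = [A \<mapsto> (if \<beta> then 1 else -1)]"
    using h by (auto simp: fun_eq_iff)
  then show ?thesis using h unfolding update_def by (auto simp: propA)
qed

lemma upd2: "update [A\<mapsto>e] (Lt b) = Some [b\<mapsto>1]"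
proof -
  have "((\<lambda>Y. if Y = b \<or> compatible b Y then [A\<mapsto>e] Y else None)(b \<mapsto> 1)) = [b \<mapsto> 1]"
    using compAb by (auto simp: fun_eq_iff)
  then show ?thesis unfolding update_def by (simp add: propb)
qed

definition ws :: "bool list \<Rightarrow> letter list" where
  "ws bs = concat (map (\<lambda>\<beta>. [if \<beta> then Lt A else Ltil A, Lt b]) bs)"

lemma run_ws: "v = Map.empty \<or> v = [b\<mapsto>1] \<Longrightarrow> run v (ws bs) \<noteq> None"
proof (induction bs arbitrary: v)
  case Nil then show ?case by (simp add: ws_def)
next
  case (Cons \<beta> bs)
  have u: "update v (if \<beta> then Lt A else Ltil A) = Some [A \<mapsto> (if \<beta> then 1 else -1)]"
  proof (rule upd1)
    show "v A = None" using Cons.prems by auto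
    show "\<forall>Y. Y \<noteq> A \<and> v Y \<noteq> None \<longrightarrow> \<not> compatible A Y"
    proof (intro allI impI)
      fix Y assume "Y \<noteq> A \<and> v Y \<noteq> None"
      then have "Y = b" using Cons.prems by (cases "Y = b") auto
      then show "\<not> compatible A Y" using compAb by simp
    qed
  qed
  have "run [b\<mapsto>1] (ws bs) \<noteq> None" using Cons.IH by simp
  then show ?case using u upd2 by (simp add: ws_def)
qed

lemma ws_cons: "ws (\<beta> # bs) = (if \<beta> then Lt A else Ltil A) # Lt b # ws bs"
  by (simp add: ws_def)

lemma ws_inj: "ws bs = ws cs \<Longrightarrow> length bs = length cs \<Longrightarrow> bs = cs"
proof (induction bs arbitrary: cs)
  case Nil then show ?case by simp
next
  case (Cons \<beta> bs)
  then obtain \<gamma> cs' where cs: "cs = \<gamma> # cs'" by (cases cs) auto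
  show ?case using Cons cs by (auto simp: ws_cons split: if_splits)
qed

lemma obs_out: "map letter_obs (out f oo x \<sigma>) = \<sigma>"
  by (induction \<sigma> arbitrary: x) auto

theorem mainTheorem5:
  "\<not> (\<exists>(H :: 'h set) (f :: 'h \<Rightarrow> obs \<Rightarrow> 'h) (oo :: 'h \<Rightarrow> obs \<Rightarrow> int).
        finite H \<and> (\<forall>x\<in>H. \<forall>s. f x s \<in> H) \<and> (\<forall>x\<in>H. \<forall>s. oo x s \<in> {1, -1}) \<and>
        (\<forall>w\<in>consistent_lang. \<exists>x\<in>H. \<exists>\<sigma>. w = out f oo x \<sigma>))"
proof
  assume "\<exists>(H :: 'h set) (f :: 'h \<Rightarrow> obs \<Rightarrow> 'h) (oo :: 'h \<Rightarrow> obs \<Rightarrow> int).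
        finite H \<and> (\<forall>x\<in>H. \<forall>s. f x s \<in> H) \<and> (\<forall>x\<in>H. \<forall>s. oo x s \<in> {1, -1}) \<and>
        (\<forall>w\<in>consistent_lang. \<exists>x\<in>H. \<exists>\<sigma>. w = out f oo x \<sigma>)"
  then obtain H :: "'h set" and f oo where fin: "finite H"
    and cov: "\<forall>w\<in>consistent_lang. \<exists>x\<in>H. \<exists>\<sigma>. w = out f oo x \<sigma>" by blast
  have cov2: "\<exists>x\<in>H. ws bs = out f oo x (map letter_obs (ws bs))" for bs
  proof -
    have "ws bs \<in> consistent_lang" using run_ws[of Map.empty bs] by (simp add: consistent_lang_def)
    then obtain x \<sigma> where "x \<in> H" "ws bs = out f oo x \<sigma>" using cov by blast
    then show ?thesis using obs_out by metis
  qed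
  define n where "n = card H"
  define S where "S = {bs :: bool list. set bs \<subseteq> UNIV \<and> length bs = n}"
  define g where "g bs = (SOME x. x \<in> H \<and> ws bs = out f oo x (map letter_obs (ws bs)))" for bs
  have g: "g bs \<in> H \<and> ws bs = out f oo (g bs) (map letter_obs (ws bs))" for bs
    unfolding g_def using someI_ex[OF cov2[of bs, unfolded Bex_def]] .
  have mo: "map letter_obs (ws bs) = concat (replicate (length bs) [A, b])" for bs
    by (induction bs) (auto simp: ws_cons ws_def)
  have "inj_on g S"
  proof (rule inj_onI)
    fix bs cs assume "bs \<in> S" "cs \<in> S" "g bs = g cs"
    then have "length bs = length cs" by (simp add: S_def)
    then have "ws bs = ws cs" using g[of bs] g[of cs] \<open>g bs = g cs\<close> mo by metis
    then show "bs = cs" using ws_inj \<open>length bs = length cs\<close> by blast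
  qed
  moreover have "g ` S \<subseteq> H" using g by blast
  ultimately have "card S \<le> card H" using card_inj_on_le fin by blast
  moreover have "card S = 2 ^ n" unfolding S_def using card_lists_length_eq[of "UNIV :: bool set" n]
    by simp
  ultimately have "2 ^ n \<le> n" using n_def by simp
  then show False using less_exp[of n] by simp
qed

end
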